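(* Let $2\le k\le n$ be integers and let $G$ be a graph on $n$ vertices. Then $bp(G)\le n-k$ if and only if $G$ has a special subgraph of order $k$.
   Context: $bp(G)$ is the minimum number of pairwise edge-disjoint complete bipartite subgraphs (bicliques) of $G$ covering every edge exactly once. A biclique is a star if one of its two parts has exactly one vertex; a non-star biclique is a complete bipartite graph $K_{a,b}$ with $a,b\ge 2$. An induced subgraph $H$ of $G$ is a special subgraph of order $k$ if for some integer $r\ge 0$, $H$ has exactly $k+r$ vertices and the edge set of $H$ can be partitioned into at most $r$ pairwise edge-disjoint non-star bicliques (in particular an independent set of size $k$ is a special subgraph of order $k$, with $r=0$). *)

theory Defs
  imports Main
begin

definition graph :: "'a set \<Rightarrow> 'a set set \<Rightarrow> bool" where
  "graph V E \<longleftrightarrow> finite V \<and> (\<forall>e\<in>E. e \<subseteq> V \<and> card e = 2)"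

definition biclique_edges :: "'a set \<Rightarrow> 'a set \<Rightarrow> 'a set set" where
  "biclique_edges A B = {{a, b} | a b. a \<in> A \<and> b \<in> B}"

definition is_biclique :: "'a set set \<Rightarrow> 'a set \<times> 'a set \<Rightarrow> bool" where
  "is_biclique E P \<longleftrightarrow> fst P \<noteq> {} \<and> snd P \<noteq> {} \<and> fst P \<inter> snd P = {}
      \<and> biclique_edges (fst P) (snd P) \<subseteq> E"

definition non_star :: "'a set \<times> 'a set \<Rightarrow> bool" where
  "non_star P \<longleftrightarrow> card (fst P) \<ge> 2 \<and> card (snd P) \<ge> 2"

definition biclique_partition :: "'a set set \<Rightarrow> ('a set \<times> 'a set) list \<Rightarrow> bool" where
  "biclique_partition E Ps \<longleftrightarrow>
     (\<forall>P\<in>set Ps. is_biclique E P)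
     \<and> (\<forall>i<length Ps. \<forall>j<length Ps. i \<noteq> j \<longrightarrow>
           biclique_edges (fst (Ps!i)) (snd (Ps!i)) \<inter> biclique_edges (fst (Ps!j)) (snd (Ps!j)) = {})
     \<and> (\<Union>P\<in>set Ps. biclique_edges (fst P) (snd P)) = E"

definition bp :: "'a set set \<Rightarrow> nat" where
  "bp E = (LEAST m. \<exists>Ps. biclique_partition E Ps \<and> length Ps = m)"

definition induced_edges :: "'a set set \<Rightarrow> 'a set \<Rightarrow> 'a set set" where
  "induced_edges E S = {e \<in> E. e \<subseteq> S}"

definition special_subgraph :: "'a set \<Rightarrow> 'a set set \<Rightarrow> 'a set \<Rightarrow> nat \<Rightarrow> bool" where
  "special_subgraph V E S k \<longleftrightarrow> S \<subseteq> V \<and>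
     (\<exists>r::nat. card S = k + r \<and>
        (\<exists>Ps. biclique_partition (induced_edges E S) Ps \<and> length Ps \<le> r
              \<and> (\<forall>P\<in>set Ps. non_star P)))"

end

theory Submission
  imports Defs
begin

abbreviation bedges :: "'a set \<times> 'a set \<Rightarrow> 'a set set" where
  "bedges P \<equiv> biclique_edges (fst P) (snd P)"

definition setpart :: "'a set set \<Rightarrow> ('a set \<times> 'a set) set \<Rightarrow> bool" where
  "setpart F Ps \<longleftrightarrow> finite Ps \<and> (\<forall>P\<in>Ps. is_biclique F P)
     \<and> (\<forall>P\<in>Ps. \<forall>Q\<in>Ps. P \<noteq> Q \<longrightarrow> bedges P \<inter> bedges Q = {})
     \<and> (\<Union>P\<in>Ps. bedges P) = F"

lemma be_mem: "e \<in> biclique_edges A B \<longleftrightarrow> (\<exists>a b. e = {a,b} \<and> a \<in> A \<and> b \<in> B)"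
  unfolding biclique_edges_def by blast

lemma be_mono: "A \<subseteq> A' \<Longrightarrow> B \<subseteq> B' \<Longrightarrow> biclique_edges A B \<subseteq> biclique_edges A' B'"
  unfolding biclique_edges_def by blast

lemma bp_parts:
  assumes "biclique_partition F Ps"
  shows "\<forall>P\<in>set Ps. is_biclique F P"
    "\<And>i j. i < length Ps \<Longrightarrow> j < length Ps \<Longrightarrow> i \<noteq> j \<Longrightarrow>
        bedges (Ps!i) \<inter> bedges (Ps!j) = {}"
    "(\<Union>P\<in>set Ps. bedges P) = F"
  using assms unfolding biclique_partition_def by blast+

lemma list_to_set:
  assumes "biclique_partition F Ps"
  shows "setpart F (set Ps) \<and> card (set Ps) \<le> length Ps"
proof -
  note B = bp_parts[OF assms]
  have D: "\<forall>P\<in>set Ps. \<forall>Q\<in>set Ps. P \<noteq> Q \<longrightarrow> bedges P \<inter> bedges Q = {}"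
  proof (intro ballI impI)
    fix P Q assume "P \<in> set Ps" "Q \<in> set Ps" "P \<noteq> Q"
    then obtain i j where ij: "i < length Ps" "j < length Ps" "P = Ps!i" "Q = Ps!j"
      by (metis in_set_conv_nth)
    then have "i \<noteq> j" using \<open>P \<noteq> Q\<close> by auto
    then have "bedges (Ps!i) \<inter> bedges (Ps!j) = {}" using B(2) ij(1) ij(2) by blast
    then show "bedges P \<inter> bedges Q = {}" using ij(3) ij(4) by simp
  qed
  have "setpart F (set Ps)" unfolding setpart_def using B(1) B(3) D by simp
  then show ?thesis using card_length by blast
qed

lemma set_to_list:
  assumes "setpart F Ps"
  shows "\<exists>L. biclique_partition F L \<and> length L = card Ps \<and> set L = Ps"
proof -
  have A: "finite Ps" "\<forall>P\<in>Ps. is_biclique F P"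
     "\<forall>P\<in>Ps. \<forall>Q\<in>Ps. P \<noteq> Q \<longrightarrow> bedges P \<inter> bedges Q = {}"
     "(\<Union>P\<in>Ps. bedges P) = F"
    using assms unfolding setpart_def by blast+
  obtain L where L: "set L = Ps" "distinct L"
    using A(1) finite_distinct_list by blast
  have D: "\<forall>i<length L. \<forall>j<length L. i \<noteq> j \<longrightarrow> bedges (L!i) \<inter> bedges (L!j) = {}"
  proof (intro allI impI)
    fix i j assume ij: "i < length L" "j < length L" "i \<noteq> j"
    then have "L!i \<noteq> L!j" using L(2) nth_eq_iff_index_eq by blast
    moreover have "L!i \<in> Ps" "L!j \<in> Ps" using L(1) ij(1) ij(2) nth_mem by blast+
    ultimately show "bedges (L!i) \<inter> bedges (L!j) = {}" using A(3) by blast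
  qed
  have "biclique_partition F L" unfolding biclique_partition_def using A(2) A(4) D L(1) by simp
  moreover have "length L = card Ps" using L distinct_card by metis
  ultimately show ?thesis using L(1) by blast
qed

lemma stars:
  assumes g: "graph V E" and fT: "finite T"
  shows "setpart (induced_edges E S) Q \<Longrightarrow>
         \<exists>P. setpart (induced_edges E (S \<union> T)) P \<and> card P \<le> card Q + card T"
  using fT
proof (induction T rule: finite_induct)
  case empty
  then show ?case by auto
next
  case (insert x T)
  then obtain P where P: "setpart (induced_edges E (S \<union> T)) P" "card P \<le> card Q + card T" by blast
  have Pfin: "finite P" and Pbic: "\<forall>R\<in>P. is_biclique (induced_edges E (S \<union> T)) R"
    and Pdis: "\<forall>R\<in>P. \<forall>R'\<in>P. R \<noteq> R' \<longrightarrow> bedges R \<inter> bedges R' = {}"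
    and PU: "(\<Union>R\<in>P. bedges R) = induced_edges E (S \<union> T)"
    using P(1) unfolding setpart_def by blast+
  have cT: "card (insert x T) = card T + 1" using insert.hyps by simp
  show ?case
  proof (cases "x \<in> S \<union> T")
    case True
    then have "S \<union> insert x T = S \<union> T" by auto
    then show ?thesis using P(1) P(2) cT by (intro exI[of _ P]) simp
  next
    case False
    define N where "N = {y \<in> S \<union> T. {x,y} \<in> E}"
    have edge_x: "\<exists>y. y \<in> N \<and> e = {x,y}" if "e \<in> E" "e \<subseteq> insert x (S \<union> T)" "x \<in> e" for e
    proof -
      have "card e = 2" using g that unfolding graph_def by auto
      then obtain a b where ab: "e = {a,b}" "a \<noteq> b" by (meson card_2_iff)
      moreover have "x = a \<or> x = b" using ab that(3) by auto
      ultimately obtain y where "e = {x,y}" "y \<noteq> x" by (metis insert_commute)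
      then show ?thesis using that unfolding N_def by auto
    qed
    have xN: "x \<notin> N"
    proof
      assume "x \<in> N"
      then have "{x} \<in> E" unfolding N_def by auto
      then show False using g unfolding graph_def by fastforce
    qed
    have oldx: "x \<notin> e" if "e \<in> induced_edges E (S \<union> T)" for e
      using that False unfolding induced_edges_def by auto
    have indsub: "induced_edges E (S \<union> T) \<subseteq> induced_edges E (S \<union> insert x T)"
      unfolding induced_edges_def by auto
    show ?thesis
    proof (cases "N = {}")
      case True
      have "induced_edges E (S \<union> insert x T) = induced_edges E (S \<union> T)"
      proof
        show "induced_edges E (S \<union> insert x T) \<subseteq> induced_edges E (S \<union> T)"
        proof
          fix e assume e: "e \<in> induced_edges E (S \<union> insert x T)"
          then have "x \<notin> e" using edge_x True unfolding induced_edges_def by auto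
          then show "e \<in> induced_edges E (S \<union> T)" using e unfolding induced_edges_def by auto
        qed
      qed (rule indsub)
      then show ?thesis using P(1) P(2) cT by (intro exI[of _ P]) simp
    next
      case Nne: False
      define P' where "P' = insert ({x}, N) P"
      have sedges: "bedges ({x}, N) \<subseteq> induced_edges E (S \<union> insert x T)"
        unfolding induced_edges_def N_def biclique_edges_def by auto
      have xin: "x \<in> e" if "e \<in> bedges ({x}, N)" for e using that be_mem[of e] by auto
      have disj: "bedges ({x}, N) \<inter> bedges R = {}" if "R \<in> P" for R
      proof -
        have "bedges R \<subseteq> induced_edges E (S \<union> T)" using PU that by blast
        then show ?thesis using xin oldx by blast
      qed
      have bic: "is_biclique (induced_edges E (S \<union> insert x T)) ({x}, N)"
        unfolding is_biclique_def using Nne xN sedges by auto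
      have U: "(\<Union>R\<in>P'. bedges R) = induced_edges E (S \<union> insert x T)"
      proof
        show "(\<Union>R\<in>P'. bedges R) \<subseteq> induced_edges E (S \<union> insert x T)"
          using sedges indsub PU unfolding P'_def by blast
      next
        show "induced_edges E (S \<union> insert x T) \<subseteq> (\<Union>R\<in>P'. bedges R)"
        proof
          fix e assume e: "e \<in> induced_edges E (S \<union> insert x T)"
          show "e \<in> (\<Union>R\<in>P'. bedges R)"
          proof (cases "x \<in> e")
            case True
            then obtain y where "y \<in> N" "e = {x,y}" using edge_x e unfolding induced_edges_def by auto
            then have "e \<in> bedges ({x}, N)" using be_mem[of e "{x}" N] by auto
            then show ?thesis unfolding P'_def by auto
          next
            case False
            then have "e \<in> induced_edges E (S \<union> T)" using e unfolding induced_edges_def by auto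
            then show ?thesis using PU unfolding P'_def by blast
          qed
        qed
      qed
      have sp: "setpart (induced_edges E (S \<union> insert x T)) P'"
        unfolding setpart_def
      proof (intro conjI)
        show "finite P'" using Pfin unfolding P'_def by blast
        have bmono: "is_biclique (induced_edges E (S \<union> insert x T)) R" if "R \<in> P" for R
          using Pbic that indsub unfolding is_biclique_def by blast
        show "\<forall>R\<in>P'. is_biclique (induced_edges E (S \<union> insert x T)) R"
          using bic bmono unfolding P'_def by blast
        note old = Pdis
        show "\<forall>R\<in>P'. \<forall>R'\<in>P'. R \<noteq> R' \<longrightarrow> bedges R \<inter> bedges R' = {}"
        proof (intro ballI impI)
          fix R R' assume a: "R \<in> P'" "R' \<in> P'" "R \<noteq> R'"
          show "bedges R \<inter> bedges R' = {}"
          proof (cases "R = ({x}, N)")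
            case True
            then have "R' \<in> P" using a unfolding P'_def by auto
            then show ?thesis using True disj by simp
          next
            case F1: False
            then have R: "R \<in> P" using a unfolding P'_def by auto
            show ?thesis
            proof (cases "R' = ({x}, N)")
              case True
              then show ?thesis using R disj by (simp add: Int_commute)
            next
              case False
              then have "R' \<in> P" using a unfolding P'_def by auto
              then show ?thesis using R old a(3) by blast
            qed
          qed
        qed
      qed (rule U)
      have fP: "finite P" using P(1) unfolding setpart_def by blast
      have "card P' \<le> card P + 1" unfolding P'_def using fP by (simp add: card_insert_if)
      then have "card P' \<le> card Q + card (insert x T)" using P(2) cT by linarith
      then show ?thesis using sp by blast
    qed
  qed
qed

lemma reduce:
  assumes g: "graph V E"
  shows "finite S \<Longrightarrow> setpart (induced_edges E S) Ps \<Longrightarrow>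
    \<exists>S' Q. S' \<subseteq> S \<and> setpart (induced_edges E S') Q \<and> (\<forall>R\<in>Q. non_star R)
       \<and> card Q + card S \<le> card S' + card Ps"
proof (induction "card Ps" arbitrary: S Ps rule: less_induct)
  case less
  show ?case
  proof (cases "\<forall>R\<in>Ps. non_star R")
    case True
    have "S \<subseteq> S \<and> setpart (induced_edges E S) Ps \<and> (\<forall>R\<in>Ps. non_star R)
       \<and> card Ps + card S \<le> card S + card Ps" using less.prems(2) True by simp
    then show ?thesis by blast
  next
    case False
    then obtain P where P: "P \<in> Ps" "\<not> non_star P" by blast
    have fin: "finite Ps" using less.prems unfolding setpart_def by blast
    have bic: "is_biclique (induced_edges E S) P" using less.prems P unfolding setpart_def by blast
    have pS1: "fst P \<subseteq> S"
    proof
      fix a assume a: "a \<in> fst P"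
      obtain b where b: "b \<in> snd P" using bic unfolding is_biclique_def by blast
      have "{a,b} \<in> bedges P" using a b be_mem by blast
      then have "{a,b} \<in> induced_edges E S" using bic unfolding is_biclique_def by blast
      then show "a \<in> S" unfolding induced_edges_def by auto
    qed
    have pS2: "snd P \<subseteq> S"
    proof
      fix b assume b: "b \<in> snd P"
      obtain a where a: "a \<in> fst P" using bic unfolding is_biclique_def by blast
      have "{a,b} \<in> bedges P" using a b be_mem by blast
      then have "{a,b} \<in> induced_edges E S" using bic unfolding is_biclique_def by blast
      then show "b \<in> S" unfolding induced_edges_def by auto
    qed
    have f1: "finite (fst P)" "finite (snd P)" using pS1 pS2 less.prems(1) finite_subset by auto
    have ne: "fst P \<noteq> {}" "snd P \<noteq> {}" using bic unfolding is_biclique_def by auto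
    have "card (fst P) < 2 \<or> card (snd P) < 2" using P(2) unfolding non_star_def by auto
    then have "card (fst P) = 1 \<or> card (snd P) = 1" using f1 ne card_0_eq by fastforce
    then obtain c where c: "fst P = {c} \<or> snd P = {c}" by (meson card_1_singletonE)
    have cS: "c \<in> S" using c pS1 pS2 by auto
    define S1 where "S1 = S - {c}"
    define R where "R = (\<lambda>Q::'a set \<times> 'a set. (fst Q - {c}, snd Q - {c}))"
    define Ps1 where "Ps1 = {Q \<in> R ` Ps. fst Q \<noteq> {} \<and> snd Q \<noteq> {}}"
    have sub: "Ps1 \<subseteq> R ` (Ps - {P})" unfolding Ps1_def R_def using c by auto
    have finPs1: "finite Ps1" using sub fin by (meson finite_Diff finite_imageI finite_subset)
    have fD: "finite (Ps - {P})" using fin by simp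
    have "card Ps1 \<le> card (R ` (Ps - {P}))" using sub fD by (simp add: card_mono)
    also have "\<dots> \<le> card (Ps - {P})" using fD by (rule card_image_le)
    also have "\<dots> < card Ps" using fin P(1) by (rule card_Diff1_less)
    finally have cardlt: "card Ps1 < card Ps" .
    have Redges: "bedges (R Q) \<subseteq> bedges Q" for Q unfolding R_def by (rule be_mono) auto
    have Rnoc: "c \<notin> e" if "e \<in> bedges (R Q)" for e Q
      using that be_mem[of e "fst (R Q)" "snd (R Q)"] unfolding R_def by auto
    have X: "finite Ps \<and> (\<forall>P\<in>Ps. is_biclique (induced_edges E S) P) \<and>
      (\<forall>P\<in>Ps. \<forall>Q\<in>Ps. P \<noteq> Q \<longrightarrow> bedges P \<inter> bedges Q = {}) \<and>
      (\<Union>P\<in>Ps. bedges P) = induced_edges E S"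
      using less.prems(2) unfolding setpart_def .
    note old = conjunct1[OF conjunct2[OF conjunct2[OF X]]] conjunct1[OF conjunct2[OF X]]
      conjunct2[OF conjunct2[OF conjunct2[OF X]]]
    have sp1: "setpart (induced_edges E S1) Ps1"
      unfolding setpart_def
    proof (intro conjI)
      show "finite Ps1" by (rule finPs1)
      show "\<forall>Q\<in>Ps1. is_biclique (induced_edges E S1) Q"
      proof
        fix Q assume "Q \<in> Ps1"
        then obtain Q0 where Q0: "Q0 \<in> Ps" "Q = R Q0" "fst Q \<noteq> {}" "snd Q \<noteq> {}"
          unfolding Ps1_def by auto
        have b0: "is_biclique (induced_edges E S) Q0" using old Q0 by blast
        have "bedges Q \<subseteq> induced_edges E S1"
        proof
          fix e assume e: "e \<in> bedges Q"
          have eR: "e \<in> bedges (R Q0)" using e Q0(2) by simp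
          then have "e \<in> bedges Q0" using Redges[of Q0] by blast
          then have "e \<in> induced_edges E S" using b0 unfolding is_biclique_def by blast
          moreover have "c \<notin> e" using Rnoc[OF eR] .
          ultimately show "e \<in> induced_edges E S1" unfolding induced_edges_def S1_def by auto
        qed
        moreover have "fst Q \<inter> snd Q = {}" using b0 Q0(2) unfolding is_biclique_def R_def by auto
        ultimately show "is_biclique (induced_edges E S1) Q"
          using Q0(3) Q0(4) unfolding is_biclique_def by blast
      qed
      show "\<forall>Q\<in>Ps1. \<forall>Q'\<in>Ps1. Q \<noteq> Q' \<longrightarrow> bedges Q \<inter> bedges Q' = {}"
      proof (intro ballI impI)
        fix Q Q' assume a: "Q \<in> Ps1" "Q' \<in> Ps1" "Q \<noteq> Q'"
        then obtain Q0 Q0' where q: "Q0 \<in> Ps" "Q = R Q0" "Q0' \<in> Ps" "Q' = R Q0'"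
          unfolding Ps1_def by auto
        then have "Q0 \<noteq> Q0'" using a(3) by auto
        then have "bedges Q0 \<inter> bedges Q0' = {}" using old(1) q(1) q(3) by blast
        then have "bedges (R Q0) \<inter> bedges (R Q0') = {}" using Redges[of Q0] Redges[of Q0'] by blast
        then show "bedges Q \<inter> bedges Q' = {}" using q(2) q(4) by simp
      qed
      show "(\<Union>Q\<in>Ps1. bedges Q) = induced_edges E S1"
      proof
        show "(\<Union>Q\<in>Ps1. bedges Q) \<subseteq> induced_edges E S1"
        proof
          fix e assume "e \<in> (\<Union>Q\<in>Ps1. bedges Q)"
          then obtain Q0 where Q0: "Q0 \<in> Ps" "e \<in> bedges (R Q0)" unfolding Ps1_def by auto
          then have "e \<in> bedges Q0" using Redges[of Q0] by blast
          then have "e \<in> induced_edges E S" using old(3) Q0(1) by blast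
          moreover have "c \<notin> e" using Rnoc[OF Q0(2)] .
          ultimately show "e \<in> induced_edges E S1" unfolding induced_edges_def S1_def by auto
        qed
      next
        show "induced_edges E S1 \<subseteq> (\<Union>Q\<in>Ps1. bedges Q)"
        proof
          fix e assume e: "e \<in> induced_edges E S1"
          then have "e \<in> induced_edges E S" unfolding induced_edges_def S1_def by auto
          then obtain Q0 where Q0: "Q0 \<in> Ps" "e \<in> bedges Q0" using old(3) by blast
          then obtain a b where ab: "e = {a,b}" "a \<in> fst Q0" "b \<in> snd Q0" using be_mem[of e "fst Q0" "snd Q0"] by blast
          have "c \<notin> e" using e unfolding induced_edges_def S1_def by auto
          then have "a \<in> fst (R Q0)" "b \<in> snd (R Q0)" using ab unfolding R_def by auto
          then have ne1: "fst (R Q0) \<noteq> {}" "snd (R Q0) \<noteq> {}" by auto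
          have "R Q0 \<in> Ps1" unfolding Ps1_def using Q0(1) ne1 by blast
          moreover have "e \<in> bedges (R Q0)" using ab(1) \<open>a \<in> fst (R Q0)\<close> \<open>b \<in> snd (R Q0)\<close>
            be_mem[of e "fst (R Q0)" "snd (R Q0)"] by blast
          ultimately show "e \<in> (\<Union>Q\<in>Ps1. bedges Q)" by blast
        qed
      qed
    qed
    have "finite S1" using less.prems(1) unfolding S1_def by simp
    from less.hyps[OF cardlt this sp1] obtain S' Q where
      Q: "S' \<subseteq> S1" "setpart (induced_edges E S') Q" "\<forall>R\<in>Q. non_star R"
         "card Q + card S1 \<le> card S' + card Ps1" by blast
    have "card S1 + 1 = card S" using cS less.prems(1) unfolding S1_def
      by (metis Suc_eq_plus1 card_Suc_Diff1)
    moreover have "S' \<subseteq> S" using Q(1) unfolding S1_def by auto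
    ultimately have "S' \<subseteq> S" "card Q + card S \<le> card S' + card Ps" using Q(4) cardlt by auto
    then show ?thesis using Q(2) Q(3) by blast
  qed
qed

theorem mainTheorem2:
  fixes V :: "'a set" and E :: "'a set set" and n k :: nat
  assumes "graph V E" and "card V = n" and "2 \<le> k" and "k \<le> n"
  shows "bp E \<le> n - k \<longleftrightarrow> (\<exists>S. special_subgraph V E S k)"
proof -
  note g = assms(1)
  have fV: "finite V" using g unfolding graph_def by blast
  have indV: "induced_edges E V = E" using g unfolding graph_def induced_edges_def by blast
  have ind0: "induced_edges E {} = {}"
  proof -
    have "e \<noteq> {}" if "e \<in> E" for e using g that unfolding graph_def by fastforce
    then show ?thesis unfolding induced_edges_def by blast
  qed
  have sp0: "setpart (induced_edges E {}) {}" unfolding ind0 by (simp add: setpart_def)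
  obtain P0 where "setpart (induced_edges E ({} \<union> V)) P0"
    using stars[OF g fV sp0] by blast
  then have "setpart E P0" using indV by simp
  then obtain L0 where L0: "biclique_partition E L0" using set_to_list by blast
  show ?thesis
  proof
    assume bpk: "bp E \<le> n - k"
    have "\<exists>Ps. biclique_partition E Ps \<and> length Ps = bp E"
      unfolding bp_def by (rule LeastI_ex) (use L0 in blast)
    then obtain L where L: "biclique_partition E L" "length L = bp E" by blast
    from list_to_set[OF L(1)] have Ls: "setpart (induced_edges E V) (set L)" "card (set L) \<le> length L"
      using indV by auto
    from reduce[OF g fV Ls(1)] obtain S' Q where
      Q: "S' \<subseteq> V" "setpart (induced_edges E S') Q" "\<forall>R\<in>Q. non_star R"
         "card Q + card V \<le> card S' + card (set L)" by blast
    from set_to_list[OF Q(2)] obtain L' where L': "biclique_partition (induced_edges E S') L'"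
      "length L' = card Q" "set L' = Q" by blast
    have ge: "card S' \<ge> k + card Q" using Q(4) Ls(2) L(2) bpk assms(2) assms(4) by linarith
    have "special_subgraph V E S' k"
      unfolding special_subgraph_def
      using Q(1) Q(3) L' ge by (intro conjI exI[of _ "card S' - k"] exI[of _ L']) auto
    then show "\<exists>S. special_subgraph V E S k" by blast
  next
    assume "\<exists>S. special_subgraph V E S k"
    then obtain S r Ps where S: "S \<subseteq> V" "card S = k + r" "biclique_partition (induced_edges E S) Ps"
      "length Ps \<le> r" "\<forall>P\<in>set Ps. non_star P"
      unfolding special_subgraph_def by blast
    from list_to_set[OF S(3)] have Ps: "setpart (induced_edges E S) (set Ps)" "card (set Ps) \<le> length Ps" by auto
    have fT: "finite (V - S)" using fV by simp
    from stars[OF g fT Ps(1)] obtain P where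
      P: "setpart (induced_edges E (S \<union> (V - S))) P" "card P \<le> card (set Ps) + card (V - S)" by blast
    have U: "S \<union> (V - S) = V" using S(1) by blast
    have cT: "card (V - S) = n - card S" using S(1) fV assms(2) by (simp add: card_Diff_subset finite_subset)
    have cS: "card S \<le> n" using S(1) fV assms(2) card_mono by blast
    have cP: "card P \<le> n - k" using P(2) cT cS S(2) S(4) Ps(2) by linarith
    from P(1) have "setpart E P" using U indV by simp
    from set_to_list[OF this] obtain L where L: "biclique_partition E L" "length L = card P" by blast
    have "bp E \<le> length L" unfolding bp_def by (rule Least_le) (use L in blast)
    then show "bp E \<le> n - k" using L(2) cP by simp
  qed
qed

end
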